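(* Let $u:[0,T]\times U\to[0,\infty)$ with each $u(t)$ continuous, and $t\in(0,T]$. The family of sets $\Gamma^+_{\eta,\sigma,r_0}(u,t)$ is monotone decreasing with respect to $\eta$ and $r_0$ and monotone increasing with respect to $\sigma$. Furthermore $$\Gamma^+(u,t)=\bigcup_{\eta>0}\bigcap_{\sigma>0}\bigcup_{r_0>0}\Gamma^+_{\eta,\sigma,r_0}(u,t),$$ and consequently, if $\mathcal{H}^{d-1}(\Gamma^+(u,t))>0$ then there is $\eta>0$ such that for every $\sigma>0$ there is $r_0(\sigma)>0$ with $\mathcal{H}^{d-1}(\Gamma^+_{\eta,\sigma,r_0}(u,t))>0$.
   Context: $U\subset\mathbb{R}^d$ open, $\mu_+>0$, $\Omega(t)=\{u(t)>0\}$. For $x_0\in\partial\Omega(t_0)$: $V_n(t_0,x_0)>0$ means there are $\eta,r_0>0$ with $\{x:|x-x_0|\le\eta(t_0-s)\}\subset\Omega(s)^\complement$ for all $t_0-r_0\le s<t_0$; for given $\eta,r_0>0$ one writes $V_n^{r_0}(t_0,x_0)\ge\eta$ if this holds with those specific $\eta,r_0$. $D_+u(t,x_0)=\{p: u(t,x)\le p\cdot(x-x_0)+o(|x-x_0|)\text{ for }x\in\overline{\Omega(t)}\}$, and for $\sigma,r_0>0$, $D_+^{\sigma,r_0}u(t,x_0)=\{p: u(t,x)\le p\cdot(x-x_0)+\sigma|x-x_0|\text{ for }x\in B_{r_0}(x_0)\cap\overline{\Omega(t)}\}$. Then $\Gamma^+(u,t)=\{x\in\partial\Omega(t): V_n(t,x)>0,\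 |p|^2<1+\mu_+\text{ for some }p\in D_+u(t,x)\}$ and $\Gamma^+_{\eta,\sigma,r_0}(u,t)=\{x\in\partial\Omega(t): V_n^{r_0}(t,x)\ge\eta\text{ and there is }p\in D_+^{\sigma,r_0}u(t,x)\text{ with }|p|^2-(1+\mu_+)<-\eta\}$. *)

theory Defs
  imports "HOL-Analysis.Analysis"
begin

definition hausdorff_const :: "real \<Rightarrow> real" where
  "hausdorff_const s = pi powr (s / 2) / Gamma (s / 2 + 1)"

text \<open>Contribution of one covering set; convention 0^0 = 1 so that H^0 is counting measure.\<close>
definition hausdorff_piece :: "real \<Rightarrow> 'a::metric_space set \<Rightarrow> ennreal" where
  "hausdorff_piece s C =
     (if C = {} then 0
      else ennreal (hausdorff_const s *
             (if s = 0 then 1 else (diameter C / 2) powr s)))"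

definition hausdorff_pre :: "real \<Rightarrow> real \<Rightarrow> 'a::metric_space set \<Rightarrow> ennreal" where
  "hausdorff_pre s \<delta> A =
     (INF C \<in> {C :: nat \<Rightarrow> 'a set. A \<subseteq> (\<Union>i. C i) \<and>
                 (\<forall>i. bounded (C i) \<and> diameter (C i) \<le> \<delta>)}.
        (\<Sum>i. hausdorff_piece s (C i)))"

definition hausdorff_measure :: "real \<Rightarrow> 'a::metric_space set \<Rightarrow> ennreal" where
  "hausdorff_measure s A = (SUP \<delta> \<in> {0<..}. hausdorff_pre s \<delta> A)"

definition Omega :: "'a::euclidean_space set \<Rightarrow> (real \<Rightarrow> 'a \<Rightarrow> real) \<Rightarrow> real \<Rightarrow> 'a set" where
  "Omega U u t = {x \<in> U. u t x > 0}"

definition Vn_ge :: "'a::euclidean_space set \<Rightarrow> (real \<Rightarrow> 'a \<Rightarrow> real) \<Rightarrow> real \<Rightarrow> real \<Rightarrow> 'a \<Rightarrow> real \<Rightarrow> bool" where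
  "Vn_ge U u r0 t0 x0 \<eta> \<longleftrightarrow>
     (\<forall>s. t0 - r0 \<le> s \<and> s < t0 \<longrightarrow> cball x0 (\<eta> * (t0 - s)) \<subseteq> - Omega U u s)"

definition Vn_pos :: "'a::euclidean_space set \<Rightarrow> (real \<Rightarrow> 'a \<Rightarrow> real) \<Rightarrow> real \<Rightarrow> 'a \<Rightarrow> bool" where
  "Vn_pos U u t0 x0 \<longleftrightarrow> (\<exists>\<eta>>0. \<exists>r0>0. Vn_ge U u r0 t0 x0 \<eta>)"

text \<open>D_+ u(t,x0): the o(|x-x0|) condition written out.\<close>
definition Dplus :: "'a::euclidean_space set \<Rightarrow> (real \<Rightarrow> 'a \<Rightarrow> real) \<Rightarrow> real \<Rightarrow> 'a \<Rightarrow> 'a set" where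
  "Dplus U u t x0 = {p. \<forall>\<epsilon>>0. \<exists>\<delta>>0. \<forall>x \<in> closure (Omega U u t) \<inter> U.
        norm (x - x0) < \<delta> \<longrightarrow> u t x \<le> p \<bullet> (x - x0) + \<epsilon> * norm (x - x0)}"

definition Dplus_sr :: "'a::euclidean_space set \<Rightarrow> (real \<Rightarrow> 'a \<Rightarrow> real) \<Rightarrow> real \<Rightarrow> real \<Rightarrow> real \<Rightarrow> 'a \<Rightarrow> 'a set" where
  "Dplus_sr U u \<sigma> r0 t x0 = {p. \<forall>x \<in> ball x0 r0 \<inter> closure (Omega U u t) \<inter> U.
        u t x \<le> p \<bullet> (x - x0) + \<sigma> * norm (x - x0)}"

definition Gamma_plus :: "'a::euclidean_space set \<Rightarrow> real \<Rightarrow> (real \<Rightarrow> 'a \<Rightarrow> real) \<Rightarrow> real \<Rightarrow> 'a set" where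
  "Gamma_plus U \<mu> u t = {x \<in> frontier (Omega U u t). Vn_pos U u t x \<and>
        (\<exists>p \<in> Dplus U u t x. (norm p)^2 < 1 + \<mu>)}"

definition Gamma_plus_param :: "'a::euclidean_space set \<Rightarrow> real \<Rightarrow> (real \<Rightarrow> 'a \<Rightarrow> real) \<Rightarrow> real \<Rightarrow> real \<Rightarrow> real \<Rightarrow> real \<Rightarrow> 'a set" where
  "Gamma_plus_param U \<mu> u \<eta> \<sigma> r0 t = {x \<in> frontier (Omega U u t). Vn_ge U u r0 t x \<eta> \<and>
        (\<exists>p \<in> Dplus_sr U u \<sigma> r0 t x. (norm p)^2 - (1 + \<mu>) < - \<eta>)}"

end

theory Submission
  imports Defs
begin

lemma haus_pre_mono:
  assumes "A \<subseteq> B"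
  shows "hausdorff_pre s \<delta> A \<le> hausdorff_pre s \<delta> B"
  unfolding hausdorff_pre_def
  by (rule INF_superset_mono) (use assms in auto)

lemma haus_mono:
  assumes "A \<subseteq> B"
  shows "hausdorff_measure s A \<le> hausdorff_measure s B"
  unfolding hausdorff_measure_def
  by (rule SUP_mono) (use haus_pre_mono[OF assms] in auto)

lemma haus_zero_iff:
  "hausdorff_measure s A = 0 \<longleftrightarrow> (\<forall>\<delta>>0. hausdorff_pre s \<delta> A = 0)"
  unfolding hausdorff_measure_def
  using SUP_bot_conv(1)[of "\<lambda>\<delta>. hausdorff_pre s \<delta> A" "{0<..}"]
  by (simp add: bot_ennreal Ball_def)

lemma pre_null_union:
  fixes A :: "nat \<Rightarrow> 'a::metric_space set"
  assumes "\<And>n. hausdorff_pre s \<delta> (A n) = 0"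
  shows "hausdorff_pre s \<delta> (\<Union>n. A n) = 0"
proof -
  have "hausdorff_pre s \<delta> (\<Union>n. A n) \<le> 0"
  proof (rule ennreal_le_epsilon)
    fix e :: real assume e: "0 < e"
    let ?S = "\<lambda>X. {C :: nat \<Rightarrow> 'a set. X \<subseteq> (\<Union>i. C i) \<and>
                 (\<forall>i. bounded (C i) \<and> diameter (C i) \<le> \<delta>)}"
    have ex: "\<forall>n. \<exists>C. C \<in> ?S (A n) \<and> (\<Sum>i. hausdorff_piece s (C i)) < ennreal (e * (1/2)^Suc n)"
    proof
      fix n
      have "hausdorff_pre s \<delta> (A n) < ennreal (e * (1/2)^Suc n)"
        using assms[of n] e by simp
      then show "\<exists>C. C \<in> ?S (A n) \<and> (\<Sum>i. hausdorff_piece s (C i)) < ennreal (e * (1/2)^Suc n)"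
        unfolding hausdorff_pre_def INF_less_iff by blast
    qed
    obtain C where C0: "\<forall>n. C n \<in> ?S (A n) \<and> (\<Sum>i. hausdorff_piece s (C n i)) < ennreal (e * (1/2)^Suc n)"
      using choice[OF ex] by blast
    have C: "\<And>n. C n \<in> ?S (A n)"
      and Cs: "\<And>n. (\<Sum>i. hausdorff_piece s (C n i)) < ennreal (e * (1/2)^Suc n)"
      using C0 by auto
    define D where "D = (\<lambda>i. case_prod C (prod_decode i))"
    have "D \<in> ?S (\<Union>n. A n)"
    proof -
      have "(\<Union>n. A n) \<subseteq> (\<Union>i. D i)"
      proof
        fix x assume "x \<in> (\<Union>n. A n)"
        then obtain n where "x \<in> A n" by auto
        then obtain m where "x \<in> C n m" using C[of n] by auto
        moreover have "D (prod_encode (n, m)) = C n m" by (simp add: D_def)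
        ultimately show "x \<in> (\<Union>i. D i)" by (metis UNIV_I UN_I)
      qed
      moreover have "\<forall>i. bounded (D i) \<and> diameter (D i) \<le> \<delta>"
      proof
        fix i
        obtain n m where nm: "prod_decode i = (n, m)" by (cases "prod_decode i")
        have "D i = C n m" unfolding D_def nm by simp
        thus "bounded (D i) \<and> diameter (D i) \<le> \<delta>" using C[of n] by simp
      qed
      ultimately show ?thesis by blast
    qed
    hence "hausdorff_pre s \<delta> (\<Union>n. A n) \<le> (\<Sum>i. hausdorff_piece s (D i))"
      unfolding hausdorff_pre_def by (rule INF_lower)
    also have "\<dots> = (\<Sum>n. \<Sum>m. hausdorff_piece s (C n m))"
    proof -
      have "\<And>i. hausdorff_piece s (D i) = (\<lambda>(n,m). hausdorff_piece s (C n m)) (prod_decode i)"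
        unfolding D_def by (simp add: split_def)
      hence "(\<Sum>i. hausdorff_piece s (D i)) = (\<Sum>i. (\<lambda>(n,m). hausdorff_piece s (C n m)) (prod_decode i))"
        by presburger
      also have "\<dots> = (\<Sum>n. \<Sum>m. hausdorff_piece s (C n m))"
        by (rule suminf_ennreal_2dimen) simp
      finally show ?thesis .
    qed
    also have "\<dots> \<le> (\<Sum>n. ennreal (e * (1/2)^Suc n))"
      by (rule suminf_le[OF less_imp_le[OF Cs] summableI summableI])
    also have "\<dots> = ennreal (\<Sum>n. e * (1/2)^Suc n)"
      by (rule suminf_ennreal2) (use e summable_mult[OF sums_summable[OF power_half_series]] in auto)
    also have "(\<Sum>n. e * (1/2::real)^Suc n) = e"
      using sums_unique[OF sums_mult[OF power_half_series, of e]] by simp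
    finally show "hausdorff_pre s \<delta> (\<Union>n. A n) \<le> 0 + ennreal e" by simp
  qed
  then show ?thesis by simp
qed

lemma haus_null_union:
  fixes A :: "nat \<Rightarrow> 'a::metric_space set"
  assumes "\<And>n. hausdorff_measure s (A n) = 0"
  shows "hausdorff_measure s (\<Union>n. A n) = 0"
  using assms pre_null_union unfolding haus_zero_iff by blast


lemma Vn_ge_mono:
  assumes "Vn_ge U u r2 t x \<eta>2" "\<eta>1 \<le> \<eta>2" "r1 \<le> r2"
  shows "Vn_ge U u r1 t x \<eta>1"
  unfolding Vn_ge_def
proof (intro allI impI)
  fix s assume s: "t - r1 \<le> s \<and> s < t"
  have "cball x (\<eta>1 * (t - s)) \<subseteq> cball x (\<eta>2 * (t - s))"
    using s assms(2) by (intro subset_cball) (simp add: mult_right_mono)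
  also have "\<dots> \<subseteq> - Omega U u s"
    using assms(1) s assms(3) unfolding Vn_ge_def by auto
  finally show "cball x (\<eta>1 * (t - s)) \<subseteq> - Omega U u s" .
qed

lemma Dplus_sr_mono:
  assumes "\<sigma>1 \<le> \<sigma>2" "r1 \<le> r2"
  shows "Dplus_sr U u \<sigma>1 r2 t x \<subseteq> Dplus_sr U u \<sigma>2 r1 t x"
proof
  fix p assume p: "p \<in> Dplus_sr U u \<sigma>1 r2 t x"
  show "p \<in> Dplus_sr U u \<sigma>2 r1 t x"
    unfolding Dplus_sr_def
  proof (intro CollectI ballI)
    fix y assume y: "y \<in> ball x r1 \<inter> closure (Omega U u t) \<inter> U"
    hence "y \<in> ball x r2 \<inter> closure (Omega U u t) \<inter> U" using assms(2) by auto
    hence "u t y \<le> p \<bullet> (y - x) + \<sigma>1 * norm (y - x)" using p unfolding Dplus_sr_def by blast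
    also have "\<dots> \<le> p \<bullet> (y - x) + \<sigma>2 * norm (y - x)"
      using assms(1) by (simp add: mult_right_mono)
    finally show "u t y \<le> p \<bullet> (y - x) + \<sigma>2 * norm (y - x)" .
  qed
qed

lemma Gamma_param_mono:
  assumes "\<eta>1 \<le> \<eta>2" "\<sigma>1 \<le> \<sigma>2" "r1 \<le> r2"
  shows "Gamma_plus_param U \<mu> u \<eta>2 \<sigma>1 r2 t \<subseteq> Gamma_plus_param U \<mu> u \<eta>1 \<sigma>2 r1 t"
proof
  fix x assume "x \<in> Gamma_plus_param U \<mu> u \<eta>2 \<sigma>1 r2 t"
  then obtain p where x: "x \<in> frontier (Omega U u t)" "Vn_ge U u r2 t x \<eta>2"
    "p \<in> Dplus_sr U u \<sigma>1 r2 t x" "(norm p)^2 - (1 + \<mu>) < - \<eta>2"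
    unfolding Gamma_plus_param_def by blast
  have "Vn_ge U u r1 t x \<eta>1" using Vn_ge_mono[OF x(2) assms(1,3)] .
  moreover have "p \<in> Dplus_sr U u \<sigma>2 r1 t x" using Dplus_sr_mono[OF assms(2,3)] x(3) by blast
  moreover have "(norm p)^2 - (1 + \<mu>) < - \<eta>1" using x(4) assms(1) by linarith
  ultimately show "x \<in> Gamma_plus_param U \<mu> u \<eta>1 \<sigma>2 r1 t"
    unfolding Gamma_plus_param_def using x(1) by blast
qed

lemma Gamma_sub:
  "Gamma_plus U \<mu> u t \<subseteq>
     (\<Union>\<eta>\<in>{0<..}. \<Inter>\<sigma>\<in>{0<..}. \<Union>r0\<in>{0<..}. Gamma_plus_param U \<mu> u \<eta> \<sigma> r0 t)"
proof
  fix x assume "x \<in> Gamma_plus U \<mu> u t"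
  then obtain p \<eta>0 r0 where x: "x \<in> frontier (Omega U u t)" "\<eta>0 > 0" "r0 > 0"
    "Vn_ge U u r0 t x \<eta>0" "p \<in> Dplus U u t x" "(norm p)^2 < 1 + \<mu>"
    unfolding Gamma_plus_def Vn_pos_def by blast
  define \<eta> where "\<eta> = min \<eta>0 ((1 + \<mu> - (norm p)^2) / 2)"
  have \<eta>: "\<eta> > 0" using x(2,6) unfolding \<eta>_def by auto
  have "x \<in> Gamma_plus_param U \<mu> u \<eta> \<sigma> (min r0 \<delta>) t"
    if \<sigma>: "\<sigma> > 0" and \<delta>: "\<delta> > 0" and D: "\<forall>y \<in> closure (Omega U u t) \<inter> U.
        norm (y - x) < \<delta> \<longrightarrow> u t y \<le> p \<bullet> (y - x) + \<sigma> * norm (y - x)" for \<sigma> \<delta>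
  proof -
    have "Vn_ge U u (min r0 \<delta>) t x \<eta>"
      by (rule Vn_ge_mono[OF x(4)]) (auto simp: \<eta>_def)
    moreover have "p \<in> Dplus_sr U u \<sigma> (min r0 \<delta>) t x"
      unfolding Dplus_sr_def
    proof (intro CollectI ballI)
      fix y assume y: "y \<in> ball x (min r0 \<delta>) \<inter> closure (Omega U u t) \<inter> U"
      hence "norm (y - x) < \<delta>" by (auto simp: dist_norm norm_minus_commute)
      thus "u t y \<le> p \<bullet> (y - x) + \<sigma> * norm (y - x)" using D y by blast
    qed
    moreover have "(norm p)^2 - (1 + \<mu>) < - \<eta>"
    proof -
      have "\<eta> \<le> (1 + \<mu> - (norm p)^2) / 2" unfolding \<eta>_def by (rule min.cobounded2)
      thus ?thesis using x(6) by simp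
    qed
    ultimately show ?thesis unfolding Gamma_plus_param_def using x(1) by blast
  qed
  moreover have "\<exists>\<delta>>0. \<forall>y \<in> closure (Omega U u t) \<inter> U.
        norm (y - x) < \<delta> \<longrightarrow> u t y \<le> p \<bullet> (y - x) + \<sigma> * norm (y - x)" if "\<sigma> > 0" for \<sigma>
    using x(5) that unfolding Dplus_def by blast
  ultimately have "\<forall>\<sigma>>0. \<exists>r>0. x \<in> Gamma_plus_param U \<mu> u \<eta> \<sigma> r t"
    using x(3) by (metis min_less_iff_conj)
  thus "x \<in> (\<Union>\<eta>\<in>{0<..}. \<Inter>\<sigma>\<in>{0<..}. \<Union>r0\<in>{0<..}. Gamma_plus_param U \<mu> u \<eta> \<sigma> r0 t)"
    using \<eta> by (auto simp: Bex_def Ball_def)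
qed


lemma Gamma_sup:
  assumes "x \<in> (\<Union>\<eta>\<in>{0<..}. \<Inter>\<sigma>\<in>{0<..}. \<Union>r0\<in>{0<..}. Gamma_plus_param U \<mu> u \<eta> \<sigma> r0 t)"
    and mu: "\<mu> > 0"
  shows "x \<in> Gamma_plus U \<mu> u t"
proof -
  obtain \<eta> where \<eta>: "\<eta> > 0" and H: "\<forall>\<sigma>>0. \<exists>r>0. x \<in> Gamma_plus_param U \<mu> u \<eta> \<sigma> r t"
    using assms(1) by simp (meson greaterThan_iff)
  have ex: "\<forall>n. \<exists>rp. fst rp > 0 \<and> x \<in> frontier (Omega U u t) \<and> Vn_ge U u (fst rp) t x \<eta> \<and>
          snd rp \<in> Dplus_sr U u (1 / Suc n) (fst rp) t x \<and> (norm (snd rp))^2 - (1 + \<mu>) < - \<eta>"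
  proof
    fix n
    obtain r where "r > 0" "x \<in> Gamma_plus_param U \<mu> u \<eta> (1 / Suc n) r t"
      using H[rule_format, of "1 / Suc n"] by auto
    then obtain p where "r > 0 \<and> x \<in> frontier (Omega U u t) \<and> Vn_ge U u r t x \<eta> \<and>
          p \<in> Dplus_sr U u (1 / Suc n) r t x \<and> (norm p)^2 - (1 + \<mu>) < - \<eta>"
      unfolding Gamma_plus_param_def by blast
    thus "\<exists>rp. fst rp > 0 \<and> x \<in> frontier (Omega U u t) \<and> Vn_ge U u (fst rp) t x \<eta> \<and>
          snd rp \<in> Dplus_sr U u (1 / Suc n) (fst rp) t x \<and> (norm (snd rp))^2 - (1 + \<mu>) < - \<eta>"
      by (intro exI[of _ "(r, p)"]) simp
  qed
  obtain f where f: "\<forall>n. fst (f n) > 0 \<and> x \<in> frontier (Omega U u t) \<and> Vn_ge U u (fst (f n)) t x \<eta> \<and>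
          snd (f n) \<in> Dplus_sr U u (1 / Suc n) (fst (f n)) t x \<and> (norm (snd (f n)))^2 - (1 + \<mu>) < - \<eta>"
    using choice[OF ex] by blast
  define r where "r = (\<lambda>n. fst (f n))"
  define p where "p = (\<lambda>n. snd (f n))"
  have rp: "\<And>n. r n > 0" "x \<in> frontier (Omega U u t)" "\<And>n. Vn_ge U u (r n) t x \<eta>"
    "\<And>n. p n \<in> Dplus_sr U u (1 / Suc n) (r n) t x" "\<And>n. (norm (p n))^2 - (1 + \<mu>) < - \<eta>"
    using f unfolding r_def p_def by auto
  have nb: "norm (p n) \<le> 1 + \<mu>" for n
  proof (cases "norm (p n) \<le> 1")
    case True thus ?thesis using mu by simp
  next
    case False
    hence "norm (p n) \<le> (norm (p n))^2" using mult_left_mono[of 1 "norm (p n)" "norm (p n)"] by (simp add: power2_eq_square)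
    thus ?thesis using rp(5)[of n] \<eta> by simp
  qed
  have "bounded (range p)" unfolding bounded_iff using nb by blast
  then obtain l g where g: "strict_mono g" and lim: "(p \<circ> g) \<longlonglongrightarrow> l"
    using bounded_imp_convergent_subsequence by blast
  have "(\<lambda>n. (norm ((p \<circ> g) n))^2) \<longlonglongrightarrow> (norm l)^2"
    by (intro tendsto_intros lim)
  moreover have "\<forall>n. (norm ((p \<circ> g) n))^2 \<le> 1 + \<mu> - \<eta>"
  proof
    fix n show "(norm ((p \<circ> g) n))^2 \<le> 1 + \<mu> - \<eta>" using rp(5)[of "g n"] by simp
  qed
  ultimately have "(norm l)^2 \<le> 1 + \<mu> - \<eta>"
    by (intro LIMSEQ_le_const2) auto
  hence lnorm: "(norm l)^2 < 1 + \<mu>" using \<eta> by simp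
  have "l \<in> Dplus U u t x"
    unfolding Dplus_def
  proof (intro CollectI allI impI)
    fix \<epsilon> :: real assume \<epsilon>: "\<epsilon> > 0"
    obtain N where N: "\<And>n. n \<ge> N \<Longrightarrow> norm ((p \<circ> g) n - l) < \<epsilon> / 2"
      using lim \<epsilon> unfolding LIMSEQ_iff by (metis half_gt_zero)
    obtain K where K: "inverse (real (Suc K)) < \<epsilon> / 2"
      using reals_Archimedean \<epsilon> by (metis half_gt_zero)
    define n where "n = max N K"
    define k where "k = g n"
    have "k \<ge> n" unfolding k_def using g by (simp add: seq_suble)
    hence "1 / real (Suc k) \<le> 1 / real (Suc K)"
      unfolding n_def by (intro divide_left_mono) auto
    hence k1: "1 / real (Suc k) < \<epsilon> / 2" using K by (simp add: inverse_eq_divide)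
    have k2: "norm (p k - l) < \<epsilon> / 2" using N[of n] unfolding k_def n_def by simp
    show "\<exists>\<delta>>0. \<forall>y\<in>closure (Omega U u t) \<inter> U.
            norm (y - x) < \<delta> \<longrightarrow> u t y \<le> l \<bullet> (y - x) + \<epsilon> * norm (y - x)"
    proof (intro exI[of _ "r k"] conjI ballI impI)
      show "r k > 0" by (rule rp(1))
      fix y assume y: "y \<in> closure (Omega U u t) \<inter> U" and d: "norm (y - x) < r k"
      hence "y \<in> ball x (r k) \<inter> closure (Omega U u t) \<inter> U"
        by (auto simp: dist_norm norm_minus_commute)
      hence a: "u t y \<le> p k \<bullet> (y - x) + 1 / Suc k * norm (y - x)"
        using rp(4)[of k] unfolding Dplus_sr_def by blast
      have b: "p k \<bullet> (y - x) = l \<bullet> (y - x) + (p k - l) \<bullet> (y - x)"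
        by (simp add: inner_diff_left)
      have c0: "(p k - l) \<bullet> (y - x) \<le> norm (p k - l) * norm (y - x)"
        by (rule norm_cauchy_schwarz)
      have c1: "norm (p k - l) * norm (y - x) \<le> \<epsilon> / 2 * norm (y - x)"
        using k2 by (intro mult_right_mono) auto
      have e: "1 / Suc k * norm (y - x) \<le> \<epsilon> / 2 * norm (y - x)"
        using k1 by (intro mult_right_mono) auto
      have f: "\<epsilon> / 2 * norm (y - x) + \<epsilon> / 2 * norm (y - x) = \<epsilon> * norm (y - x)"
        by (simp add: field_simps)
      show "u t y \<le> l \<bullet> (y - x) + \<epsilon> * norm (y - x)"
        using a b c0 c1 e f by linarith
    qed
  qed
  moreover have "Vn_pos U u t x" unfolding Vn_pos_def using \<eta> rp(1,3) by blast
  ultimately show ?thesis unfolding Gamma_plus_def using rp(2) lnorm by blast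
qed

theorem lemma4p8:
  fixes U :: "'a::euclidean_space set" and u :: "real \<Rightarrow> 'a \<Rightarrow> real"
    and T t \<mu> :: real
  assumes "open U" and "\<mu> > 0"
    and "\<forall>s\<in>{0..T}. \<forall>x\<in>U. u s x \<ge> 0"
    and "\<forall>s\<in>{0..T}. continuous_on U (u s)"
    and "t \<in> {0<..T}"
  shows "(\<forall>\<eta>1 \<eta>2 \<sigma> r0. 0 < \<eta>1 \<longrightarrow> \<eta>1 \<le> \<eta>2 \<longrightarrow> 0 < \<sigma> \<longrightarrow> 0 < r0 \<longrightarrow>
            Gamma_plus_param U \<mu> u \<eta>2 \<sigma> r0 t \<subseteq> Gamma_plus_param U \<mu> u \<eta>1 \<sigma> r0 t)
       \<and> (\<forall>\<eta> \<sigma> r1 r2. 0 < \<eta> \<longrightarrow> 0 < \<sigma> \<longrightarrow> 0 < r1 \<longrightarrow> r1 \<le> r2 \<longrightarrow>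
            Gamma_plus_param U \<mu> u \<eta> \<sigma> r2 t \<subseteq> Gamma_plus_param U \<mu> u \<eta> \<sigma> r1 t)
       \<and> (\<forall>\<eta> \<sigma>1 \<sigma>2 r0. 0 < \<eta> \<longrightarrow> 0 < \<sigma>1 \<longrightarrow> \<sigma>1 \<le> \<sigma>2 \<longrightarrow> 0 < r0 \<longrightarrow>
            Gamma_plus_param U \<mu> u \<eta> \<sigma>1 r0 t \<subseteq> Gamma_plus_param U \<mu> u \<eta> \<sigma>2 r0 t)
       \<and> Gamma_plus U \<mu> u t =
           (\<Union>\<eta>\<in>{0<..}. \<Inter>\<sigma>\<in>{0<..}. \<Union>r0\<in>{0<..}. Gamma_plus_param U \<mu> u \<eta> \<sigma> r0 t)
       \<and> (hausdorff_measure (real DIM('a) - 1) (Gamma_plus U \<mu> u t) > 0 \<longrightarrow>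
           (\<exists>\<eta>>0. \<forall>\<sigma>>0. \<exists>r0>0.
              hausdorff_measure (real DIM('a) - 1) (Gamma_plus_param U \<mu> u \<eta> \<sigma> r0 t) > 0))"
proof -
  let ?G = "\<lambda>\<eta> \<sigma> r. Gamma_plus_param U \<mu> u \<eta> \<sigma> r t"
  let ?H = "hausdorff_measure (real DIM('a) - 1)"
  have eq: "Gamma_plus U \<mu> u t =
           (\<Union>\<eta>\<in>{0<..}. \<Inter>\<sigma>\<in>{0<..}. \<Union>r0\<in>{0<..}. Gamma_plus_param U \<mu> u \<eta> \<sigma> r0 t)"
  proof (rule equalityI[OF Gamma_sub])
    show "(\<Union>\<eta>\<in>{0<..}. \<Inter>\<sigma>\<in>{0<..}. \<Union>r0\<in>{0<..}. Gamma_plus_param U \<mu> u \<eta> \<sigma> r0 t) \<subseteq> Gamma_plus U \<mu> u t"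
    proof
      fix x assume "x \<in> (\<Union>\<eta>\<in>{0<..}. \<Inter>\<sigma>\<in>{0<..}. \<Union>r0\<in>{0<..}. Gamma_plus_param U \<mu> u \<eta> \<sigma> r0 t)"
      thus "x \<in> Gamma_plus U \<mu> u t" by (rule Gamma_sup[OF _ assms(2)])
    qed
  qed
  have last: "\<exists>\<eta>>0. \<forall>\<sigma>>0. \<exists>r0>0. ?H (?G \<eta> \<sigma> r0) > 0"
    if pos: "?H (Gamma_plus U \<mu> u t) > 0"
  proof (rule ccontr)
    assume neg: "\<not> ?thesis"
    have "\<forall>n. \<exists>\<sigma>>0. \<forall>r0>0. ?H (?G (1 / Suc n) \<sigma> r0) = 0"
    proof
      fix n :: nat
      have "(1 / real (Suc n)) > 0" by simp
      have "\<not> (\<forall>\<sigma>>0. \<exists>r0>0. ?H (?G (1 / Suc n) \<sigma> r0) > 0)"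
      proof
        assume A: "\<forall>\<sigma>>0. \<exists>r0>0. ?H (?G (1 / Suc n) \<sigma> r0) > 0"
        have "\<exists>\<eta>>0. \<forall>\<sigma>>0. \<exists>r0>0. ?H (?G \<eta> \<sigma> r0) > 0"
          by (rule exI[of _ "1 / real (Suc n)"]) (use A in simp)
        thus False using neg by simp
      qed
      then obtain \<sigma>' where s1: "\<sigma>' > 0" and s2: "\<forall>r0>0. \<not> (?H (?G (1 / Suc n) \<sigma>' r0) > 0)"
        by blast
      show "\<exists>\<sigma>>0. \<forall>r0>0. ?H (?G (1 / Suc n) \<sigma> r0) = 0"
      proof (intro exI[of _ \<sigma>'] conjI allI impI)
        show "\<sigma>' > 0" by (rule s1)
        fix r0 :: real assume "r0 > 0"
        thus "?H (?G (1 / Suc n) \<sigma>' r0) = 0" using s2 by simp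
      qed
    qed
    then obtain \<sigma> where \<sigma>0: "\<forall>n. \<sigma> n > 0 \<and> (\<forall>r0>0. ?H (?G (1 / Suc n) (\<sigma> n) r0) = 0)"
      using choice[of "\<lambda>n s. s > 0 \<and> (\<forall>r0>0. ?H (?G (1 / Suc n) s r0) = 0)"] by blast
    have \<sigma>: "\<And>n. \<sigma> n > 0" "\<And>n r0. r0 > 0 \<Longrightarrow> ?H (?G (1 / Suc n) (\<sigma> n) r0) = 0"
      using \<sigma>0 by auto
    have sub: "Gamma_plus U \<mu> u t \<subseteq> (\<Union>n. \<Union>m. ?G (1 / Suc n) (\<sigma> n) (1 / Suc m))"
    proof
      fix x assume "x \<in> Gamma_plus U \<mu> u t"
      hence "x \<in> (\<Union>\<eta>\<in>{0<..}. \<Inter>\<sigma>\<in>{0<..}. \<Union>r0\<in>{0<..}. Gamma_plus_param U \<mu> u \<eta> \<sigma> r0 t)"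
        using eq by simp
      then obtain \<eta> where \<eta>: "\<eta> > 0" and H0: "x \<in> (\<Inter>\<sigma>\<in>{0<..}. \<Union>r0\<in>{0<..}. ?G \<eta> \<sigma> r0)"
        by auto
      have H: "\<forall>s>0. \<exists>r>0. x \<in> ?G \<eta> s r"
      proof (intro allI impI)
        fix s :: real assume "s > 0"
        hence "x \<in> (\<Union>r0\<in>{0<..}. ?G \<eta> s r0)" using H0 by blast
        thus "\<exists>r>0. x \<in> ?G \<eta> s r" by auto
      qed
      obtain n where n: "inverse (real (Suc n)) < \<eta>" using reals_Archimedean \<eta> by blast
      obtain r where r: "r > 0" "x \<in> ?G \<eta> (\<sigma> n) r" using H \<sigma>(1) by blast
      obtain m where m: "inverse (real (Suc m)) < r" using reals_Archimedean r(1) by blast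
      have "?G \<eta> (\<sigma> n) r \<subseteq> ?G (1 / Suc n) (\<sigma> n) (1 / Suc m)"
        by (rule Gamma_param_mono) (use n m in \<open>auto simp: inverse_eq_divide\<close>)
      thus "x \<in> (\<Union>n. \<Union>m. ?G (1 / Suc n) (\<sigma> n) (1 / Suc m))" using r(2) by blast
    qed
    have "?H (\<Union>n. \<Union>m. ?G (1 / Suc n) (\<sigma> n) (1 / Suc m)) = 0"
      by (intro haus_null_union \<sigma>(2)) simp
    hence "?H (Gamma_plus U \<mu> u t) = 0"
      using haus_mono[OF sub, of "real DIM('a) - 1"] by simp
    thus False using pos by simp
  qed
  show ?thesis
  proof (intro conjI)
    show "\<forall>\<eta>1 \<eta>2 \<sigma> r0. 0 < \<eta>1 \<longrightarrow> \<eta>1 \<le> \<eta>2 \<longrightarrow> 0 < \<sigma> \<longrightarrow> 0 < r0 \<longrightarrow>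
            ?G \<eta>2 \<sigma> r0 \<subseteq> ?G \<eta>1 \<sigma> r0"
      by (intro allI impI Gamma_param_mono) auto
    show "\<forall>\<eta> \<sigma> r1 r2. 0 < \<eta> \<longrightarrow> 0 < \<sigma> \<longrightarrow> 0 < r1 \<longrightarrow> r1 \<le> r2 \<longrightarrow>
            ?G \<eta> \<sigma> r2 \<subseteq> ?G \<eta> \<sigma> r1"
      by (intro allI impI Gamma_param_mono) auto
    show "\<forall>\<eta> \<sigma>1 \<sigma>2 r0. 0 < \<eta> \<longrightarrow> 0 < \<sigma>1 \<longrightarrow> \<sigma>1 \<le> \<sigma>2 \<longrightarrow> 0 < r0 \<longrightarrow>
            ?G \<eta> \<sigma>1 r0 \<subseteq> ?G \<eta> \<sigma>2 r0"
      by (intro allI impI Gamma_param_mono) auto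
    show "Gamma_plus U \<mu> u t =
           (\<Union>\<eta>\<in>{0<..}. \<Inter>\<sigma>\<in>{0<..}. \<Union>r0\<in>{0<..}. Gamma_plus_param U \<mu> u \<eta> \<sigma> r0 t)"
      by (rule eq)
    show "?H (Gamma_plus U \<mu> u t) > 0 \<longrightarrow> (\<exists>\<eta>>0. \<forall>\<sigma>>0. \<exists>r0>0. ?H (?G \<eta> \<sigma> r0) > 0)"
      using last by blast
  qed
qed

end
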